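(* If $\{T_i\}_{i=1}^M$ is an extremal quantum $1$-tester on $\mathcal H_2\otimes\mathcal H_1$ with normalization $\sum_iT_i=I_2\otimes\frac1{d_1}I_1$, then $\{d_1T_i\}_{i=1}^M$ is an extremal POVM on $\mathcal H_2\otimes\mathcal H_1$.
   Context: $d_1=\dim\mathcal H_1<\infty$. A quantum $1$-tester with $M$ outcomes is a family of positive operators $\{T_i\}_{i=1}^M$ on $\mathcal H_2\otimes\mathcal H_1$ with $\sum_iT_i=I_2\otimes\rho$ for a density operator $\rho$; extremal means an extreme point of the convex set of all such testers with $M$ outcomes. An extremal POVM with $M$ outcomes is an extreme point of the convex set of $M$-outcome POVMs (positive operators summing to the identity). *)

theory Defs
  imports Complex_Main
begin

text \<open>Operators on a finite-dimensional Hilbert space with orthonormal basis indexed by the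
finite type 'i are represented as complex matrices 'i \<Rightarrow> 'i \<Rightarrow> complex.
The space H2 \<otimes> H1 has basis indexed by 'b \<times> 'a, where 'b indexes H2 and 'a indexes H1.
M-outcome families are indexed by a finite type 'm with CARD('m) = M.\<close>

type_synonym 'i op = "'i \<Rightarrow> 'i \<Rightarrow> complex"

definition id_op :: "'i op" where
  "id_op = (\<lambda>i j. if i = j then 1 else 0)"

definition op_trace :: "('i::finite) op \<Rightarrow> complex" where
  "op_trace A = (\<Sum>i\<in>UNIV. A i i)"

definition positive_op :: "('i::finite) op \<Rightarrow> bool" where
  "positive_op A \<longleftrightarrow> (\<forall>v :: 'i \<Rightarrow> complex.
     let q = (\<Sum>i\<in>UNIV. \<Sum>j\<in>UNIV. cnj (v i) * A i j * v j) in Im q = 0 \<and> Re q \<ge> 0)"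

definition density_op :: "('i::finite) op \<Rightarrow> bool" where
  "density_op \<rho> \<longleftrightarrow> positive_op \<rho> \<and> op_trace \<rho> = 1"

definition tensor_op :: "'b op \<Rightarrow> 'a op \<Rightarrow> ('b \<times> 'a) op" where
  "tensor_op X Y = (\<lambda>(b, a) (b', a'). X b b' * Y a a')"

definition sum_ops :: "('m::finite \<Rightarrow> 'i op) \<Rightarrow> 'i op" where
  "sum_ops T = (\<lambda>x y. \<Sum>i\<in>UNIV. T i x y)"

definition is_tester :: "('m::finite \<Rightarrow> ('b::finite \<times> 'a::finite) op) \<Rightarrow> bool" where
  "is_tester T \<longleftrightarrow> (\<forall>i. positive_op (T i)) \<and>
     (\<exists>\<rho> :: 'a op. density_op \<rho> \<and> sum_ops T = tensor_op id_op \<rho>)"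

definition is_povm :: "('m::finite \<Rightarrow> ('i::finite) op) \<Rightarrow> bool" where
  "is_povm E \<longleftrightarrow> (\<forall>i. positive_op (E i)) \<and> sum_ops E = id_op"

definition convex_comb :: "real \<Rightarrow> ('m \<Rightarrow> 'i op) \<Rightarrow> ('m \<Rightarrow> 'i op) \<Rightarrow> ('m \<Rightarrow> 'i op)" where
  "convex_comb t Y Z = (\<lambda>k x y. complex_of_real t * Y k x y + complex_of_real (1 - t) * Z k x y)"

definition extreme_in :: "('m \<Rightarrow> 'i op) set \<Rightarrow> ('m \<Rightarrow> 'i op) \<Rightarrow> bool" where
  "extreme_in S X \<longleftrightarrow> X \<in> S \<and>
     (\<forall>Y\<in>S. \<forall>Z\<in>S. \<forall>t. 0 < t \<and> t < 1 \<and> X = convex_comb t Y Z \<longrightarrow> Y = X \<and> Z = X)"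

definition extremal_tester :: "('m::finite \<Rightarrow> ('b::finite \<times> 'a::finite) op) \<Rightarrow> bool" where
  "extremal_tester T \<longleftrightarrow> extreme_in {S. is_tester S} T"

definition extremal_povm :: "('m::finite \<Rightarrow> ('i::finite) op) \<Rightarrow> bool" where
  "extremal_povm E \<longleftrightarrow> extreme_in {S. is_povm S} E"

end

theory Submission
  imports Defs
begin

lemma pos_scale:
  fixes A :: "('i::finite) op"
  assumes "positive_op A" "c \<ge> 0"
  shows "positive_op (\<lambda>x y. complex_of_real c * A x y)"
  unfolding positive_op_def Let_def
proof
  fix v :: "'i \<Rightarrow> complex"
  let ?q = "(\<Sum>i\<in>UNIV. \<Sum>j\<in>UNIV. cnj (v i) * A i j * v j)"
  have e: "(\<Sum>i\<in>UNIV. \<Sum>j\<in>UNIV. cnj (v i) * (complex_of_real c * A i j) * v j) = complex_of_real c * ?q"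
    by (simp add: sum_distrib_left mult_ac)
  have "Im ?q = 0 \<and> Re ?q \<ge> 0" using assms(1) unfolding positive_op_def Let_def by blast
  then show "Im (\<Sum>i\<in>UNIV. \<Sum>j\<in>UNIV. cnj (v i) * (complex_of_real c * A i j) * v j) = 0 \<and>
     0 \<le> Re (\<Sum>i\<in>UNIV. \<Sum>j\<in>UNIV. cnj (v i) * (complex_of_real c * A i j) * v j)"
    unfolding e using assms(2) by simp
qed

lemma tensor_id: "tensor_op (id_op :: 'b op) (id_op :: 'a op) = (id_op :: ('b \<times> 'a) op)"
  unfolding tensor_op_def id_op_def by (auto simp: fun_eq_iff)

lemma pos_id: "positive_op (id_op :: ('i::finite) op)"
  unfolding positive_op_def Let_def
proof
  fix v :: "'i \<Rightarrow> complex"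
  have "(\<Sum>i\<in>UNIV. \<Sum>j\<in>UNIV. cnj (v i) * id_op i j * v j) = (\<Sum>i\<in>UNIV. complex_of_real ((cmod (v i))^2))"
  proof (rule sum.cong[OF refl])
    fix i
    have "(\<Sum>j\<in>UNIV. cnj (v i) * id_op i j * v j) = cnj (v i) * v i"
    proof -
      have "(\<lambda>j. cnj (v i) * id_op i j * v j) = (\<lambda>j. if i = j then cnj (v i) * v i else 0)"
        by (auto simp: id_op_def fun_eq_iff)
      thus ?thesis by (simp only:) simp
    qed
    also have "\<dots> = complex_of_real ((cmod (v i))^2)" using complex_norm_square[of "v i"] by (simp add: mult.commute)
    finally show "(\<Sum>j\<in>UNIV. cnj (v i) * id_op i j * v j) = complex_of_real ((cmod (v i))^2)" .
  qed
  then show "Im (\<Sum>i\<in>UNIV. \<Sum>j\<in>UNIV. cnj (v i) * id_op i j * v j) = 0 \<and> 0 \<le> Re (\<Sum>i\<in>UNIV. \<Sum>j\<in>UNIV. cnj (v i) * id_op i j * v j)"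
    by (simp add: sum_nonneg)
qed

theorem mainTheorem8:
  fixes T :: "'m::finite \<Rightarrow> ('b::finite \<times> 'a::finite) op"
  assumes "extremal_tester T"
    and "sum_ops T = tensor_op (id_op :: 'b op)
           (\<lambda>x y. (1 / of_nat (card (UNIV :: 'a set))) * (id_op :: 'a op) x y)"
  shows "extremal_povm (\<lambda>k x y. of_nat (card (UNIV :: 'a set)) * T k x y)"
proof -
  define d :: real where "d = real (card (UNIV :: 'a set))"
  have dpos: "d > 0" unfolding d_def by (simp add: finite_UNIV_card_ge_0)
  have cd: "(of_nat (card (UNIV :: 'a set)) :: complex) = complex_of_real d" unfolding d_def by simp
  let ?E = "\<lambda>k x y. of_nat (card (UNIV :: 'a set)) * T k x y"
  have Tt: "is_tester T" and extT: "\<forall>Y\<in>{S. is_tester S}. \<forall>Z\<in>{S. is_tester S}. \<forall>t. 0 < t \<and> t < 1 \<and> T = convex_comb t Y Z \<longrightarrow> Y = T \<and> Z = T"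
    using assms(1) unfolding extremal_tester_def extreme_in_def by auto
  have Tpos: "\<And>k. positive_op (T k)" using Tt unfolding is_tester_def by blast
  have sumT: "\<And>x y. sum_ops T x y = complex_of_real (1/d) * id_op x y"
    using assms(2) unfolding tensor_op_def id_op_def d_def by (auto simp: fun_eq_iff split: if_splits)
  have toT: "is_tester (\<lambda>k x y. complex_of_real (1/d) * Y k x y)" if "is_povm Y" for Y :: "'m \<Rightarrow> ('b \<times> 'a) op"
  proof -
    have p: "\<And>k. positive_op (\<lambda>x y. complex_of_real (1/d) * Y k x y)"
      using that dpos unfolding is_povm_def by (intro pos_scale) auto
    have s: "sum_ops (\<lambda>k x y. complex_of_real (1/d) * Y k x y) = tensor_op (id_op :: 'b op)
           (\<lambda>x y. complex_of_real (1/d) * (id_op :: 'a op) x y)"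
    proof -
      have "sum_ops (\<lambda>k x y. complex_of_real (1/d) * Y k x y) = (\<lambda>x y. complex_of_real (1/d) * sum_ops Y x y)"
        unfolding sum_ops_def by (simp add: sum_distrib_left)
      also have "\<dots> = (\<lambda>x y. complex_of_real (1/d) * id_op x y)" using that unfolding is_povm_def by simp
      finally show ?thesis unfolding tensor_op_def id_op_def by (auto simp: fun_eq_iff)
    qed
    have dens: "density_op (\<lambda>x y. complex_of_real (1/d) * (id_op :: 'a op) x y)"
    proof -
      have "positive_op (id_op :: 'a op)" by (rule pos_id)
      hence "positive_op (\<lambda>x y. complex_of_real (1/d) * (id_op :: 'a op) x y)" using dpos by (intro pos_scale) auto
      moreover have "op_trace (\<lambda>x y. complex_of_real (1/d) * (id_op :: 'a op) x y) = 1"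
        unfolding op_trace_def id_op_def using dpos by (simp add: d_def)
      ultimately show ?thesis unfolding density_op_def by simp
    qed
    show ?thesis unfolding is_tester_def using p s dens by blast
  qed
  have Epovm: "is_povm ?E"
  proof -
    have "\<And>k. positive_op (?E k)" unfolding cd using dpos Tpos by (intro pos_scale) auto
    moreover have "sum_ops ?E = id_op"
    proof -
      have "sum_ops ?E = (\<lambda>x y. complex_of_real d * sum_ops T x y)"
        unfolding sum_ops_def cd by (simp add: sum_distrib_left)
      also have "\<dots> = id_op" using dpos by (simp add: sumT fun_eq_iff)
      finally show ?thesis .
    qed
    ultimately show ?thesis unfolding is_povm_def by blast
  qed
  show ?thesis unfolding extremal_povm_def extreme_in_def
  proof (intro conjI ballI allI impI)
    show "?E \<in> {S. is_povm S}" using Epovm by simp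
  next
    fix Y Z t assume Y: "Y \<in> {S. is_povm S}" and Z: "Z \<in> {S. is_povm S}"
      and h: "0 < t \<and> t < 1 \<and> ?E = convex_comb t Y Z"
    let ?Y = "\<lambda>k x y. complex_of_real (1/d) * Y k x y"
    let ?Z = "\<lambda>k x y. complex_of_real (1/d) * Z k x y"
    have "T = convex_comb t ?Y ?Z"
    proof (intro ext)
      fix k x y
      have "?E k x y = convex_comb t Y Z k x y" using h by (metis (no_types))
      hence "complex_of_real d * T k x y = complex_of_real t * Y k x y + complex_of_real (1 - t) * Z k x y"
        unfolding cd convex_comb_def by simp
      hence "T k x y = complex_of_real (1/d) * (complex_of_real t * Y k x y + complex_of_real (1 - t) * Z k x y)"
        using dpos by (simp add: field_simps)
      thus "T k x y = convex_comb t ?Y ?Z k x y" unfolding convex_comb_def by (simp add: distrib_left)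
    qed
    hence eq: "?Y = T \<and> ?Z = T" using extT toT Y Z h by auto
    have bk: "W = ?E" if "(\<lambda>k x y. complex_of_real (1/d) * W k x y) = T" for W :: "'m \<Rightarrow> ('b \<times> 'a) op"
    proof (intro ext)
      fix k x y
      have "complex_of_real (1/d) * W k x y = T k x y" using fun_cong[OF fun_cong[OF fun_cong[OF that, of k], of x], of y] by simp
      thus "W k x y = ?E k x y" unfolding cd using dpos by (auto simp: field_simps)
    qed
    show "Y = ?E" using eq bk by blast
    show "Z = ?E" using eq bk by blast
  qed
qed

end
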